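(* Let $H_A,H_B,H_C,H_D$ be finite-dimensional Hilbert spaces, let $|\psi_{AB}\rangle\in H_A\otimes H_B$ and $|\phi_{CD}\rangle\in H_C\otimes H_D$ be unit vectors with Schmidt decompositions $|\psi_{AB}\rangle=\sum_i\lambda_i|i_Ai_B\rangle$ and $|\phi_{CD}\rangle=\sum_j\mu_j|j_Cj_D\rangle$ (Schmidt coefficients $\lambda_i,\mu_j\ge 0$), and let $\rho_{AB}=|\psi_{AB}\rangle\langle\psi_{AB}|$, $\rho_{CD}=|\phi_{CD}\rangle\langle\phi_{CD}|$. Then $$N_H^{b}(\rho_{AB}\otimes\rho_{CD})=1-\sum_{i,j}\lambda_i^4\mu_j^4 .$$
   Context: For states $\rho_{AB}$ on $H_A\otimes H_B$ and $\rho_{CD}$ on $H_C\otimes H_D$, the nonbilocality measure is defined as $$N_H^{b}(\rho_{AB}\otimes\rho_{CD})=\max_{\Pi^{BC}}\big\|\sqrt{\rho_{AB}\otimes\rho_{CD}}-\Pi^{BC}(\sqrt{\rho_{AB}\otimes\rho_{CD}})\big\|^2,$$ where $\|X\|=\sqrt{\mathrm{tr}(X^\dagger X)}$ is the Hilbert–Schmidt norm, the maximum is over all von Neumann (complete rank-one projective) measurements $\Pi^{BC}=\{\Pi^{BC}_h\}$ on $H_B\otimes H_C$ that leave $\rho_{BC}=\mathrm{tr}_{AD}(\rho_{AB}\otimes\rho_{CD})=\rho_B\otimes\rho_C$ invariant, i.e. $\sum_h\Pi^{BC}_h\rho_{BC}\Pi^{BC}_h=\rho_{BC}$, and $\Pi^{BC}(X)=\sum_h(I^A\otimes\Pi^{BC}_h\otimes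 I^D)X(I^A\otimes\Pi^{BC}_h\otimes I^D)$ (with the tensor factors ordered $A,B,C,D$). *)

theory Defs
  imports "HOL-Analysis.Analysis"
begin

text \<open>Finite-dimensional Hilbert spaces are modelled as complex^'n for a finite
index type 'n; operators as complex^'n^'n.\<close>

definition adj :: "complex^'n^'m \<Rightarrow> complex^'m^'n" where
  "adj M = (\<chi> i j. cnj (M$j$i))"

definition outer :: "complex^'n \<Rightarrow> complex^'n \<Rightarrow> complex^'n^'n" where
  "outer u v = (\<chi> i j. u$i * cnj (v$j))"

definition cscale :: "complex \<Rightarrow> complex^'n \<Rightarrow> complex^'n" where
  "cscale c v = (\<chi> i. c * v$i)"

definition tensor_vec :: "complex^'a \<Rightarrow> complex^'b \<Rightarrow> complex^('a \<times> 'b)" where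
  "tensor_vec u v = (\<chi> p. u$(fst p) * v$(snd p))"

definition tensor_op :: "complex^'a^'a \<Rightarrow> complex^'b^'b \<Rightarrow> complex^('a \<times> 'b)^('a \<times> 'b)" where
  "tensor_op X Y = (\<chi> p q. X$(fst p)$(fst q) * Y$(snd p)$(snd q))"

definition psd :: "complex^'n^'n \<Rightarrow> bool" where
  "psd M \<longleftrightarrow> (\<forall>v::complex^'n. \<exists>r::real. r \<ge> 0 \<and>
      (\<Sum>i\<in>UNIV. \<Sum>j\<in>UNIV. cnj (v$i) * M$i$j * v$j) = complex_of_real r)"

definition mat_sqrt :: "complex^'n::finite^'n \<Rightarrow> complex^'n^'n" where
  "mat_sqrt M = (THE X. psd X \<and> X ** X = M)"

definition mtrace :: "complex^'n^'n \<Rightarrow> complex" where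
  "mtrace M = (\<Sum>i\<in>UNIV. M$i$i)"

definition hs_norm :: "complex^'n^'n \<Rightarrow> real" where
  "hs_norm X = sqrt (Re (mtrace (adj X ** X)))"

definition orthonormal_family :: "nat \<Rightarrow> (nat \<Rightarrow> complex^'n) \<Rightarrow> bool" where
  "orthonormal_family n u \<longleftrightarrow> (\<forall>i<n. \<forall>j<n.
      (\<Sum>x\<in>UNIV. cnj (u i $ x) * u j $ x) = (if i = j then 1 else 0))"

definition rank_one_proj :: "complex^'n^'n \<Rightarrow> bool" where
  "rank_one_proj P \<longleftrightarrow> (\<exists>e::complex^'n. norm e = 1 \<and> P = outer e e)"

definition von_neumann_meas :: "nat \<Rightarrow> (nat \<Rightarrow> complex^'n^'n) \<Rightarrow> bool" where
  "von_neumann_meas m P \<longleftrightarrow> (\<forall>h<m. rank_one_proj (P h)) \<and> (\<Sum>h<m. P h) = mat 1"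

definition meas_channel :: "nat \<Rightarrow> (nat \<Rightarrow> complex^'n^'n) \<Rightarrow> complex^'n^'n \<Rightarrow> complex^'n^'n" where
  "meas_channel m P X = (\<Sum>h<m. P h ** X ** P h)"

text \<open>I^A (x) P (x) I^D on ((a,b),(c,d)) for P acting on H_B (x) H_C.\<close>
definition embed_BC :: "complex^('b::finite \<times> 'c::finite)^('b \<times> 'c) \<Rightarrow>
    complex^(('a::finite \<times> 'b) \<times> ('c \<times> 'd::finite))^(('a \<times> 'b) \<times> ('c \<times> 'd))" where
  "embed_BC P = (\<chi> p q.
     if fst (fst p) = fst (fst q) \<and> snd (snd p) = snd (snd q)
     then P$(snd (fst p), fst (snd p))$(snd (fst q), fst (snd q)) else 0)"

definition ptrace_AD :: "complex^(('a::finite \<times> 'b::finite) \<times> ('c::finite \<times> 'd::finite))^(('a \<times> 'b) \<times> ('c \<times> 'd)) \<Rightarrow>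
    complex^('b \<times> 'c)^('b \<times> 'c)" where
  "ptrace_AD R = (\<chi> p q. \<Sum>a\<in>UNIV. \<Sum>d\<in>UNIV.
      R$((a, fst p), (snd p, d))$((a, fst q), (snd q, d)))"

definition NHb :: "complex^('a::finite \<times> 'b::finite)^('a \<times> 'b) \<Rightarrow> complex^('c::finite \<times> 'd::finite)^('c \<times> 'd) \<Rightarrow> real" where
  "NHb rhoAB rhoCD =
    (let R = tensor_op rhoAB rhoCD; S = mat_sqrt R; rhoBC = ptrace_AD R in
     Sup { (hs_norm (S - (\<Sum>h<m. embed_BC (P h) ** S ** embed_BC (P h))))\<^sup>2 | m P.
           von_neumann_meas m P \<and> meas_channel m P rhoBC = rhoBC })"

end

theory Submission
  imports Defs
begin


definition ip :: "complex^'n::finite \<Rightarrow> complex^'n \<Rightarrow> complex" where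
  "ip u v = (\<Sum>i\<in>UNIV. cnj (u$i) * v$i)"

definition msc :: "complex \<Rightarrow> complex^'n::finite^'m::finite \<Rightarrow> complex^'n^'m" where
  "msc c M = (\<chi> i j. c * M$i$j)"

definition hsip :: "complex^'n::finite^'m::finite \<Rightarrow> complex^'n^'m \<Rightarrow> complex" where
  "hsip X Y = (\<Sum>p\<in>UNIV. \<Sum>q\<in>UNIV. cnj (X$p$q) * Y$p$q)"

lemma mmult_nth: "(A ** B)$i$j = (\<Sum>k\<in>UNIV. A$i$k * B$k$j)"
  by (simp add: matrix_matrix_mult_def)

lemma mvmult_nth: "(A *v x)$i = (\<Sum>j\<in>UNIV. A$i$j * x$j)"
  by (simp add: matrix_vector_mult_def)

lemma outer_nth[simp]: "outer u v $i$j = u$i * cnj (v$j)" by (simp add: outer_def)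
lemma msc_nth[simp]: "msc c M $i$j = c * M$i$j" by (simp add: msc_def)
lemma adj_nth[simp]: "adj M $i$j = cnj (M$j$i)" by (simp add: adj_def)
lemma cscale_nth[simp]: "cscale c v $i = c * v$i" by (simp add: cscale_def)
lemma tensor_vec_nth[simp]: "tensor_vec u v $p = u$(fst p) * v$(snd p)" by (simp add: tensor_vec_def)
lemma tensor_op_nth[simp]: "tensor_op X Y $p$q = X$(fst p)$(fst q) * Y$(snd p)$(snd q)" by (simp add: tensor_op_def)
lemma mat_nth: "mat c $i$j = (if i = j then c else 0)" by (simp add: mat_def)

lemma sum_vec_nth: "(\<Sum>h\<in>S. f h) $ i = (\<Sum>h\<in>S. f h $ i)"
  by (induct S rule: infinite_finite_induct) auto

lemma sum_mat_nth: "(\<Sum>h\<in>S. f h) $ i $ j = (\<Sum>h\<in>S. f h $ i $ j)"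
  by (simp add: sum_vec_nth)

lemma sum_univ_prod: "(\<Sum>p\<in>(UNIV::('a::finite\<times>'b::finite) set). f p) = (\<Sum>a\<in>UNIV. \<Sum>b\<in>UNIV. f (a,b))"
  by (simp add: sum.cartesian_product)

lemma outer_mult: "outer u v ** outer w z = msc (ip v w) (outer u z)"
  by (simp add: vec_eq_iff mmult_nth ip_def sum_distrib_left sum_distrib_right mult_ac)

lemma msc_mult_left: "msc c A ** B = msc c (A ** B)"
  by (simp add: vec_eq_iff mmult_nth sum_distrib_left mult_ac)
lemma msc_mult_right: "A ** msc c B = msc c (A ** B)"
  by (simp add: vec_eq_iff mmult_nth sum_distrib_left mult_ac)
lemma msc_msc[simp]: "msc c (msc d A) = msc (c*d) A"
  by (simp add: vec_eq_iff mult_ac)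
lemma msc_1[simp]: "msc 1 A = A" by (simp add: vec_eq_iff)
lemma msc_0[simp]: "msc 0 A = 0" by (simp add: vec_eq_iff)

lemma adj_outer[simp]: "adj (outer u v) = outer v u" by (simp add: vec_eq_iff)
lemma adj_adj[simp]: "adj (adj A) = A" by (simp add: vec_eq_iff)
lemma adj_mult: "adj (A ** B) = adj B ** adj A"
  by (simp add: vec_eq_iff mmult_nth mult_ac)
lemma adj_diff: "adj (A - B) = adj A - adj B" by (simp add: vec_eq_iff)
lemma adj_sum: "adj (\<Sum>h\<in>S. f h) = (\<Sum>h\<in>S. adj (f h))"
  by (simp add: vec_eq_iff sum_mat_nth)

lemma mtrace_outer: "mtrace (A ** outer u v) = ip v (A *v u)"
  by (simp add: mtrace_def ip_def mmult_nth mvmult_nth sum_distrib_left sum_distrib_right mult_ac)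

lemma mtrace_comm: "mtrace (A ** B) = mtrace (B ** A)"
  by (simp add: mtrace_def mmult_nth mult_ac) (rule sum.swap)

lemma mtrace_sum: "mtrace (\<Sum>h\<in>S. f h) = (\<Sum>h\<in>S. mtrace (f h))"
  by (simp add: mtrace_def sum_mat_nth) (rule sum.swap)

lemma mtrace_msc: "mtrace (msc c A) = c * mtrace A"
  by (simp add: mtrace_def sum_distrib_left)

lemma outer_mv: "outer u v *v x = cscale (ip v x) u"
  by (simp add: vec_eq_iff mvmult_nth ip_def sum_distrib_left sum_distrib_right mult_ac)

lemma ip_adj: "ip u (A *v v) = ip (adj A *v u) v"
  by (simp add: ip_def mvmult_nth sum_distrib_left sum_distrib_right mult_ac) (rule sum.swap)

lemma mult_outer_left: "A ** outer u v = outer (A *v u) v"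
  by (simp add: vec_eq_iff mmult_nth mvmult_nth sum_distrib_right sum_distrib_left mult_ac)

lemma mult_outer_right: "outer u v ** B = outer u (adj B *v v)"
  by (simp add: vec_eq_iff mmult_nth mvmult_nth sum_distrib_left mult_ac)

lemma hsip_outer: "hsip (outer a b) (outer c d) = ip a c * ip d b"
  by (simp add: hsip_def ip_def sum_distrib_left sum_distrib_right mult_ac)

lemma sum3_swap: "(\<Sum>p\<in>A. \<Sum>q\<in>B. \<Sum>h\<in>C. f p q h) = (\<Sum>h\<in>C. \<Sum>p\<in>A. \<Sum>q\<in>B. f p q h)"
proof -
  have "(\<Sum>p\<in>A. \<Sum>q\<in>B. \<Sum>h\<in>C. f p q h) = (\<Sum>p\<in>A. \<Sum>h\<in>C. \<Sum>q\<in>B. f p q h)"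
    by (rule sum.cong[OF refl], rule sum.swap)
  also have "\<dots> = (\<Sum>h\<in>C. \<Sum>p\<in>A. \<Sum>q\<in>B. f p q h)" by (rule sum.swap)
  finally show ?thesis .
qed

lemma mult_cnj_sq: "cnj z * z = of_real ((cmod z)^2)"
  using complex_norm_square[of z] by (simp add: mult.commute)

lemma mult_cnj_sq2: "z * cnj z = (complex_of_real (cmod z))^2"
  using complex_norm_square[of z] by simp

lemma hsip_sum_left: "hsip (\<Sum>h\<in>S. f h) Y = (\<Sum>h\<in>S. hsip (f h) Y)"
proof -
  have "hsip (\<Sum>h\<in>S. f h) Y = (\<Sum>p\<in>UNIV. \<Sum>q\<in>UNIV. \<Sum>h\<in>S. cnj (f h $p$q) * Y$p$q)"
    by (simp add: hsip_def sum_mat_nth sum_distrib_right)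
  also have "\<dots> = (\<Sum>h\<in>S. hsip (f h) Y)"
    unfolding hsip_def by (rule sum3_swap)
  finally show ?thesis .
qed

lemma hsip_sum_right: "hsip X (\<Sum>h\<in>S. f h) = (\<Sum>h\<in>S. hsip X (f h))"
proof -
  have "hsip X (\<Sum>h\<in>S. f h) = (\<Sum>p\<in>UNIV. \<Sum>q\<in>UNIV. \<Sum>h\<in>S. cnj (X $p$q) * f h$p$q)"
    by (simp add: hsip_def sum_mat_nth sum_distrib_left)
  also have "\<dots> = (\<Sum>h\<in>S. hsip X (f h))"
    unfolding hsip_def by (rule sum3_swap)
  finally show ?thesis .
qed

lemma hsip_diff: "hsip (A - B) (A - B) = hsip A A - hsip A B - hsip B A + hsip B B"
  by (simp add: hsip_def algebra_simps sum_subtractf sum.distrib)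

lemma hsip_self: "hsip X X = of_real (\<Sum>p\<in>UNIV. \<Sum>q\<in>UNIV. (cmod (X$p$q))^2)"
  by (simp add: hsip_def mult_cnj_sq of_real_sum)

lemma mtrace_adj: "mtrace (adj X ** X) = hsip X X"
  by (simp add: mtrace_def hsip_def mmult_nth) (rule sum.swap)

lemma hs_norm_sq: "(hs_norm X)^2 = Re (hsip X X)"
proof -
  have "Re (hsip X X) \<ge> 0" unfolding hsip_self Re_complex_of_real
    by (intro sum_nonneg zero_le_power2)
  then show ?thesis unfolding hs_norm_def mtrace_adj by (rule real_sqrt_pow2)
qed

lemma ip_self: "ip v v = of_real ((norm v)^2)"
  by (simp add: ip_def norm_vec_def L2_set_def sum_nonneg mult_cnj_sq of_real_sum)


lemma ip_zero_right[simp]: "ip u 0 = 0" by (simp add: ip_def)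
lemma mv_zero_mat[simp]: "(0::complex^'n::finite^'m::finite) *v x = 0"
  by (simp add: vec_eq_iff mvmult_nth)

lemma main_norm:
  fixes Psi :: "complex^'n::finite" and E :: "nat \<Rightarrow> complex^'n^'n"
  assumes psi1: "ip Psi Psi = 1" and herm: "\<forall>h<m. adj (E h) = E h"
    and orth: "\<forall>h<m. \<forall>g<m. E h ** E g = (if h = g then E h else 0)"
  shows "(hs_norm (outer Psi Psi - (\<Sum>h<m. E h ** outer Psi Psi ** E h)))^2
         = 1 - Re (\<Sum>h<m. (ip Psi (E h *v Psi))^2)"
proof -
  define w where "w h = E h *v Psi" for h
  define p where "p h = ip Psi (E h *v Psi)" for h
  have eq: "E h ** outer Psi Psi ** E h = outer (w h) (w h)" if "h < m" for h
    using herm that by (simp add: mult_outer_left mult_outer_right w_def)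
  have W: "(\<Sum>h<m. E h ** outer Psi Psi ** E h) = (\<Sum>h<m. outer (w h) (w h))"
    by (rule sum.cong) (auto simp: eq)
  have i1: "ip Psi (w h) = p h" for h by (simp add: w_def p_def)
  have i2: "ip (w h) Psi = p h" if "h < m" for h
    using herm that ip_adj[of Psi "E h" Psi] by (simp add: w_def p_def)
  have i3: "ip (w h) (w g) = (if h = g then p h else 0)" if "h < m" "g < m" for h g
  proof -
    have "ip (w h) (w g) = ip Psi (E h *v (E g *v Psi))"
      using herm that ip_adj[of Psi "E h" "E g *v Psi"] by (simp add: w_def)
    also have "\<dots> = ip Psi ((E h ** E g) *v Psi)" by (simp add: matrix_vector_mul_assoc)
    finally show ?thesis using orth that by (simp add: p_def)
  qed
  let ?R = "outer Psi Psi" and ?W = "\<Sum>h<m. outer (w h) (w h)"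
  have "hsip ?R ?R = 1" using psi1 by (simp add: hsip_outer)
  moreover have "hsip ?R ?W = (\<Sum>h<m. p h * p h)"
    by (simp add: hsip_sum_right hsip_outer i1 i2)
  moreover have "hsip ?W ?R = (\<Sum>h<m. p h * p h)"
    by (simp add: hsip_sum_left hsip_outer i1 i2)
  moreover have "hsip ?W ?W = (\<Sum>h<m. p h * p h)"
  proof -
    have "hsip ?W ?W = (\<Sum>h<m. \<Sum>g<m. ip (w g) (w h) * ip (w h) (w g))"
      by (simp add: hsip_sum_left hsip_sum_right hsip_outer)
    also have "\<dots> = (\<Sum>h<m. \<Sum>g<m. if h = g then p h * p h else 0)"
      by (rule sum.cong[OF refl], rule sum.cong[OF refl]) (simp add: i3)
    also have "\<dots> = (\<Sum>h<m. p h * p h)" by simp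
    finally show ?thesis .
  qed
  ultimately have "hsip (?R - ?W) (?R - ?W) = 1 - (\<Sum>h<m. (p h)^2)"
    by (simp add: hsip_diff power2_eq_square)
  then show ?thesis by (simp add: hs_norm_sq W p_def)
qed


lemma sum_univ_quad: "(\<Sum>p\<in>(UNIV::(('a::finite\<times>'b::finite)\<times>('c::finite\<times>'d::finite)) set). f p) = (\<Sum>a\<in>UNIV. \<Sum>b\<in>UNIV. \<Sum>c\<in>UNIV. \<Sum>d\<in>UNIV. f((a,b),(c,d)))"
  apply (subst sum_univ_prod)
  apply (subst sum_univ_prod)
  apply (subst sum_univ_prod)
  apply (rule refl)
  done

lemma if_mult0: "(if P then x else 0) * y = (if P then x * y else (0::complex))" by simp

lemma sum_delta_ad:
  fixes g :: "'b::finite \<Rightarrow> 'c::finite \<Rightarrow> complex"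
  shows "(\<Sum>a'\<in>(UNIV::'a::finite set). \<Sum>b'\<in>UNIV. \<Sum>c'\<in>UNIV. \<Sum>d'\<in>(UNIV::'d::finite set).
     (if a = a' \<and> d = d' then g b' c' else 0) * h a' b' c' d') = (\<Sum>b'\<in>UNIV. \<Sum>c'\<in>UNIV. g b' c' * h a b' c' d)"
proof -
  have 1: "(\<Sum>d'\<in>(UNIV::'d set). (if a = a' \<and> d = d' then g b' c' else 0) * h a' b' c' d')
      = (if a = a' then g b' c' * h a' b' c' d else 0)" for a' b' c'
    by (cases "a = a'") (simp_all add: if_mult0)
  have 2: "(\<Sum>b'\<in>UNIV. \<Sum>c'\<in>UNIV. (if a = a' then g b' c' * h a' b' c' d else 0)) =
     (if a = a' then (\<Sum>b'\<in>UNIV. \<Sum>c'\<in>UNIV. g b' c' * h a' b' c' d) else 0)" for a'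
    by (cases "a = a'") simp_all
  show ?thesis by (simp only: 1 2) simp
qed

lemma embed_mv: "(embed_BC P *v Psi) $((a,b),(c,d)) =
   (\<Sum>b'\<in>UNIV. \<Sum>c'\<in>UNIV. P$(b,c)$(b',c') * Psi$((a,b'),(c',d)))"
proof -
  have "(embed_BC P *v Psi) $((a,b),(c,d)) = (\<Sum>a'\<in>UNIV. \<Sum>b'\<in>UNIV. \<Sum>c'\<in>UNIV. \<Sum>d'\<in>UNIV.
     (if a = a' \<and> d = d' then P$(b,c)$(b',c') else 0) * Psi$((a',b'),(c',d')))"
    apply (unfold mvmult_nth)
    apply (subst sum_univ_quad)
    apply (unfold embed_BC_def vec_lambda_beta fst_conv snd_conv)
    apply (rule refl)
    done
  also have "\<dots> = (\<Sum>b'\<in>UNIV. \<Sum>c'\<in>UNIV. P$(b,c)$(b',c') * Psi$((a,b'),(c',d)))"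
    by (rule sum_delta_ad)
  finally show ?thesis .
qed

lemma perm6: "(\<Sum>a\<in>A. \<Sum>b\<in>B. \<Sum>c\<in>C. \<Sum>d\<in>D. \<Sum>e\<in>E. \<Sum>f\<in>F. g a b c d e f) =
  (\<Sum>b\<in>B. \<Sum>c\<in>C. \<Sum>e\<in>E. \<Sum>f\<in>F. \<Sum>a\<in>A. \<Sum>d\<in>D. g a b c d e f)"
proof -
  have "(\<Sum>a\<in>A. \<Sum>b\<in>B. \<Sum>c\<in>C. \<Sum>d\<in>D. \<Sum>e\<in>E. \<Sum>f\<in>F. g a b c d e f) =
     (\<Sum>b\<in>B. \<Sum>c\<in>C. \<Sum>a\<in>A. \<Sum>d\<in>D. \<Sum>e\<in>E. \<Sum>f\<in>F. g a b c d e f)"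
    by (rule sum3_swap[symmetric])
  also have "\<dots> = (\<Sum>b\<in>B. \<Sum>c\<in>C. \<Sum>e\<in>E. \<Sum>a\<in>A. \<Sum>d\<in>D. \<Sum>f\<in>F. g a b c d e f)"
    by (intro sum.cong refl sum3_swap)
  also have "\<dots> = (\<Sum>b\<in>B. \<Sum>c\<in>C. \<Sum>e\<in>E. \<Sum>f\<in>F. \<Sum>a\<in>A. \<Sum>d\<in>D. g a b c d e f)"
    by (intro sum.cong refl sum3_swap)
  finally show ?thesis .
qed

lemma embed_ip: "ip Psi (embed_BC P *v Psi) = mtrace (ptrace_AD (outer Psi Psi) ** P)"
proof -
  have "ip Psi (embed_BC P *v Psi) = (\<Sum>a\<in>UNIV. \<Sum>b\<in>UNIV. \<Sum>c\<in>UNIV. \<Sum>d\<in>UNIV.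
     cnj (Psi$((a,b),(c,d))) * (\<Sum>b'\<in>UNIV. \<Sum>c'\<in>UNIV. P$(b,c)$(b',c') * Psi$((a,b'),(c',d))))"
    unfolding ip_def by (subst sum_univ_quad) (simp only: embed_mv)
  also have "\<dots> = (\<Sum>a\<in>UNIV. \<Sum>b\<in>UNIV. \<Sum>c\<in>UNIV. \<Sum>d\<in>UNIV. \<Sum>b'\<in>UNIV. \<Sum>c'\<in>UNIV.
     cnj (Psi$((a,b),(c,d))) * P$(b,c)$(b',c') * Psi$((a,b'),(c',d)))"
    by (simp add: sum_distrib_left mult_ac)
  also have "\<dots> = (\<Sum>b\<in>UNIV. \<Sum>c\<in>UNIV. \<Sum>b'\<in>UNIV. \<Sum>c'\<in>UNIV. \<Sum>a\<in>UNIV. \<Sum>d\<in>UNIV.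
     cnj (Psi$((a,b),(c,d))) * P$(b,c)$(b',c') * Psi$((a,b'),(c',d)))"
    by (rule perm6)
  also have "\<dots> = mtrace (P ** ptrace_AD (outer Psi Psi))"
    unfolding mtrace_def mmult_nth ptrace_AD_def
    by (simp add: sum_univ_prod sum_distrib_left sum_distrib_right mult_ac)
  also have "\<dots> = mtrace (ptrace_AD (outer Psi Psi) ** P)" by (rule mtrace_comm)
  finally show ?thesis .
qed


lemma R_eq: "tensor_op (outer psi psi) (outer phi phi) = outer (tensor_vec psi phi) (tensor_vec psi phi)"
  by (simp add: vec_eq_iff mult_ac)

lemma ip_tensor: "ip (tensor_vec u v) (tensor_vec u' v') = ip u u' * ip v v'"
  by (simp add: ip_def sum_univ_prod sum_product mult_ac)

lemma ip_cnj: "ip v u = cnj (ip u v)"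
  by (simp add: ip_def mult.commute)

lemma ip_cscale_right: "ip u (cscale c v) = c * ip u v"
  by (simp add: ip_def sum_distrib_left mult_ac)

lemma ip_sum_right: "ip u (\<Sum>h\<in>S. f h) = (\<Sum>h\<in>S. ip u (f h))"
  by (simp add: ip_def sum_vec_nth sum_distrib_left) (rule sum.swap)

lemma mv_sum_left: "(\<Sum>h\<in>S. f h) *v x = (\<Sum>h\<in>S. f h *v x)"
  by (simp add: vec_eq_iff mvmult_nth sum_vec_nth sum_mat_nth sum_distrib_right) (intro allI sum.swap)

lemma mmult_sum_left: "(\<Sum>h\<in>S. f h) ** B = (\<Sum>h\<in>S. f h ** B)"
  by (simp add: vec_eq_iff mmult_nth sum_mat_nth sum_distrib_right) (intro allI sum.swap)

lemma mmult_sum_right: "A ** (\<Sum>h\<in>S. f h) = (\<Sum>h\<in>S. A ** f h)"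
  by (simp add: vec_eq_iff mmult_nth sum_mat_nth sum_distrib_left) (intro allI sum.swap)

lemma ptrace_tensor: "ptrace_AD (outer (tensor_vec psi phi) (tensor_vec psi phi)) =
  tensor_op (\<chi> b b'. \<Sum>a\<in>UNIV. psi$(a,b) * cnj (psi$(a,b')))
            (\<chi> c c'. \<Sum>d\<in>UNIV. phi$(c,d) * cnj (phi$(c',d)))"
  by (simp add: vec_eq_iff ptrace_AD_def sum_product mult_ac)

lemma tensor_mult: "tensor_op A B ** tensor_op C D = tensor_op (A ** C) (B ** D)"
  by (simp add: vec_eq_iff mmult_nth sum_univ_prod sum_product mult_ac)

lemma mtrace_tensor: "mtrace (tensor_op X Y) = mtrace X * mtrace Y"
  by (simp add: mtrace_def sum_univ_prod sum_product)

lemma mtrace_outer1: "mtrace (outer u v) = ip v u"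
  by (simp add: mtrace_def ip_def mult.commute)

lemma ortho_ip: "orthonormal_family n u \<Longrightarrow> i < n \<Longrightarrow> j < n \<Longrightarrow> ip (u i) (u j) = (if i = j then 1 else 0)"
  by (simp add: orthonormal_family_def ip_def)

lemma trace_sq_diag:
  assumes "orthonormal_family n u"
  shows "mtrace ((\<Sum>i<n. msc (c i) (outer (u i) (u i))) ** (\<Sum>i<n. msc (c i) (outer (u i) (u i))))
    = (\<Sum>i<n. (c i)^2)"
proof -
  have "mtrace ((\<Sum>i<n. msc (c i) (outer (u i) (u i))) ** (\<Sum>i<n. msc (c i) (outer (u i) (u i))))
     = (\<Sum>i<n. \<Sum>j<n. c i * c j * (ip (u i) (u j) * ip (u j) (u i)))"
    by (simp add: mmult_sum_left mmult_sum_right mtrace_sum msc_mult_left msc_mult_right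
        outer_mult mtrace_msc mtrace_outer1 mult_ac sum_distrib_left)
  also have "\<dots> = (\<Sum>i<n. \<Sum>j<n. if i = j then c i * c i else 0)"
    by (intro sum.cong refl) (simp add: ortho_ip[OF assms])
  also have "\<dots> = (\<Sum>i<n. (c i)^2)" by (simp add: power2_eq_square)
  finally show ?thesis .
qed

lemma schmidt_B:
  assumes on: "orthonormal_family n uA"
    and psi: "psi = (\<Sum>i<n. cscale (complex_of_real (lam i)) (tensor_vec (uA i) (uB i)))"
  shows "(\<chi> b b'. \<Sum>a\<in>UNIV. psi$(a,b) * cnj (psi$(a,b'))) =
    (\<Sum>i<n. msc (complex_of_real ((lam i)^2)) (outer (uB i) (uB i)))"
proof -
  have pe: "psi$(a,b) = (\<Sum>i<n. of_real (lam i) * (uA i $ a * uB i $ b))" for a b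
    by (simp add: psi sum_vec_nth)
  have "(\<Sum>a\<in>UNIV. psi$(a,b) * cnj (psi$(a,b'))) =
     (\<Sum>i<n. of_real ((lam i)^2) * (uB i $ b * cnj (uB i $ b')))" for b b'
  proof -
    have "(\<Sum>a\<in>UNIV. psi$(a,b) * cnj (psi$(a,b'))) = (\<Sum>a\<in>UNIV. \<Sum>i<n. \<Sum>j<n.
        of_real (lam i) * of_real (lam j) * (uB i $ b * cnj (uB j $ b')) * (cnj (uA j $ a) * uA i $ a))"
      by (simp add: pe sum_product cnj_sum mult_ac)
    also have "\<dots> = (\<Sum>i<n. \<Sum>j<n. \<Sum>a\<in>UNIV.
        of_real (lam i) * of_real (lam j) * (uB i $ b * cnj (uB j $ b')) * (cnj (uA j $ a) * uA i $ a))"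
      by (rule sum3_swap[symmetric])
    also have "\<dots> = (\<Sum>i<n. \<Sum>j<n.
        of_real (lam i) * of_real (lam j) * (uB i $ b * cnj (uB j $ b')) * ip (uA j) (uA i))"
      by (simp add: ip_def sum_distrib_left)
    also have "\<dots> = (\<Sum>i<n. \<Sum>j<n. if i = j then
        of_real ((lam i)^2) * (uB i $ b * cnj (uB i $ b')) else 0)"
      by (intro sum.cong refl) (simp add: ortho_ip[OF on] power2_eq_square)
    also have "\<dots> = (\<Sum>i<n. of_real ((lam i)^2) * (uB i $ b * cnj (uB i $ b')))" by simp
    finally show ?thesis .
  qed
  then show ?thesis by (simp add: vec_eq_iff sum_mat_nth)
qed

lemma schmidt_C:
  assumes on: "orthonormal_family k vD"
    and phi: "phi = (\<Sum>j<k. cscale (complex_of_real (mu j)) (tensor_vec (vC j) (vD j)))"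
  shows "(\<chi> c c'. \<Sum>d\<in>UNIV. phi$(c,d) * cnj (phi$(c',d))) =
    (\<Sum>j<k. msc (complex_of_real ((mu j)^2)) (outer (vC j) (vC j)))"
proof -
  have pe: "phi$(c,d) = (\<Sum>i<k. of_real (mu i) * (vC i $ c * vD i $ d))" for c d
    by (simp add: phi sum_vec_nth)
  have "(\<Sum>d\<in>UNIV. phi$(c,d) * cnj (phi$(c',d))) =
     (\<Sum>i<k. of_real ((mu i)^2) * (vC i $ c * cnj (vC i $ c')))" for c c'
  proof -
    have "(\<Sum>d\<in>UNIV. phi$(c,d) * cnj (phi$(c',d))) = (\<Sum>d\<in>UNIV. \<Sum>i<k. \<Sum>j<k.
        of_real (mu i) * of_real (mu j) * (vC i $ c * cnj (vC j $ c')) * (cnj (vD j $ d) * vD i $ d))"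
      by (simp add: pe sum_product cnj_sum mult_ac)
    also have "\<dots> = (\<Sum>i<k. \<Sum>j<k. \<Sum>d\<in>UNIV.
        of_real (mu i) * of_real (mu j) * (vC i $ c * cnj (vC j $ c')) * (cnj (vD j $ d) * vD i $ d))"
      by (rule sum3_swap[symmetric])
    also have "\<dots> = (\<Sum>i<k. \<Sum>j<k.
        of_real (mu i) * of_real (mu j) * (vC i $ c * cnj (vC j $ c')) * ip (vD j) (vD i))"
      by (simp add: ip_def sum_distrib_left)
    also have "\<dots> = (\<Sum>i<k. \<Sum>j<k. if i = j then
        of_real ((mu i)^2) * (vC i $ c * cnj (vC i $ c')) else 0)"
      by (intro sum.cong refl) (simp add: ortho_ip[OF on] power2_eq_square)
    also have "\<dots> = (\<Sum>i<k. of_real ((mu i)^2) * (vC i $ c * cnj (vC i $ c')))" by simp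
    finally show ?thesis .
  qed
  then show ?thesis by (simp add: vec_eq_iff sum_mat_nth)
qed

lemma trace_sq_channel:
  fixes rho :: "complex^'m::finite^'m"
  assumes P: "\<forall>h<m. P h = outer (e h) (e h)" and inv: "meas_channel m P rho = rho"
  shows "mtrace (rho ** rho) = (\<Sum>h<m. (mtrace (rho ** P h))^2)"
proof -
  have pp: "P h ** rho ** P h = msc (mtrace (rho ** P h)) (P h)" if "h < m" for h
  proof -
    have "P h ** rho ** P h = outer (e h) (adj rho *v e h) ** outer (e h) (e h)"
      using P that by (simp add: mult_outer_right)
    also have "\<dots> = msc (ip (adj rho *v e h) (e h)) (outer (e h) (e h))" by (rule outer_mult)
    finally show ?thesis using P that ip_adj[of "e h" rho "e h"] by (simp add: mtrace_outer)
  qed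
  have "mtrace (rho ** rho) = mtrace (rho ** meas_channel m P rho)" using inv by simp
  also have "\<dots> = (\<Sum>h<m. mtrace (rho ** (P h ** rho ** P h)))"
    by (simp add: meas_channel_def mmult_sum_right mtrace_sum)
  also have "\<dots> = (\<Sum>h<m. (mtrace (rho ** P h))^2)"
    by (intro sum.cong refl) (simp add: pp msc_mult_right mtrace_msc power2_eq_square)
  finally show ?thesis .
qed


lemma embed_BC_nth: "embed_BC P $((a,b),(c,d)) $((a',b'),(c',d')) =
   (if a = a' \<and> d = d' then P$(b,c)$(b',c') else 0)"
  by (simp add: embed_BC_def)

lemma embed_mult: "embed_BC A ** embed_BC B = (embed_BC (A ** B) :: complex^(('a::finite\<times>'b::finite)\<times>('c::finite\<times>'d::finite))^(('a\<times>'b)\<times>('c\<times>'d)))"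
proof -
  have "(embed_BC A ** embed_BC B :: complex^(('a\<times>'b)\<times>('c\<times>'d))^(('a\<times>'b)\<times>('c\<times>'d))) $((a,b),(c,d)) $((a',b'),(c',d'))
     = embed_BC (A ** B) $((a,b),(c,d)) $((a',b'),(c',d'))" for a b c d a' b' c' d'
  proof -
    have "(embed_BC A ** embed_BC B :: complex^(('a\<times>'b)\<times>('c\<times>'d))^(('a\<times>'b)\<times>('c\<times>'d))) $((a,b),(c,d)) $((a',b'),(c',d'))
      = (\<Sum>a''\<in>UNIV. \<Sum>b''\<in>UNIV. \<Sum>c''\<in>UNIV. \<Sum>d''\<in>UNIV.
         (if a = a'' \<and> d = d'' then A$(b,c)$(b'',c'') else 0) * (embed_BC B :: complex^(('a\<times>'b)\<times>('c\<times>'d))^(('a\<times>'b)\<times>('c\<times>'d))) $((a'',b''),(c'',d'')) $((a',b'),(c',d')))"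
      apply (unfold mmult_nth)
      apply (subst sum_univ_quad)
      apply (unfold embed_BC_def[of A] vec_lambda_beta fst_conv snd_conv)
      apply (rule refl)
      done
    also have "\<dots> = (\<Sum>b''\<in>UNIV. \<Sum>c''\<in>UNIV. A$(b,c)$(b'',c'') * (embed_BC B :: complex^(('a\<times>'b)\<times>('c\<times>'d))^(('a\<times>'b)\<times>('c\<times>'d))) $((a,b''),(c'',d)) $((a',b'),(c',d')))"
      by (rule sum_delta_ad)
    also have "\<dots> = embed_BC (A ** B) $((a,b),(c,d)) $((a',b'),(c',d'))"
      by (cases "a = a' \<and> d = d'") (auto simp: embed_BC_nth mmult_nth sum_univ_prod)
    finally show ?thesis .
  qed
  then show ?thesis by (simp add: vec_eq_iff)
qed

lemma embed_adj: "adj (embed_BC A) = (embed_BC (adj A) :: complex^(('a::finite\<times>'b::finite)\<times>('c::finite\<times>'d::finite))^(('a\<times>'b)\<times>('c\<times>'d)))"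
  by (auto simp: vec_eq_iff embed_BC_nth)

lemma embed_zero: "embed_BC 0 = (0 :: complex^(('a::finite\<times>'b::finite)\<times>('c::finite\<times>'d::finite))^(('a\<times>'b)\<times>('c\<times>'d)))"
  by (simp add: vec_eq_iff embed_BC_def)

lemma mv_cscale: "A *v cscale c v = cscale c (A *v v)"
  by (simp add: vec_eq_iff mvmult_nth sum_distrib_left mult_ac)

lemma vn_structure:
  fixes P :: "nat \<Rightarrow> complex^'n::finite^'n"
  assumes "von_neumann_meas m P"
  shows "\<exists>e. (\<forall>h<m. P h = outer (e h) (e h) \<and> ip (e h) (e h) = 1) \<and>
             (\<forall>h<m. \<forall>g<m. h \<noteq> g \<longrightarrow> ip (e h) (e g) = 0)"
proof -
  from assms have "\<forall>h<m. \<exists>e. norm e = 1 \<and> P h = outer e e"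
    by (simp add: von_neumann_meas_def rank_one_proj_def)
  then obtain e where e: "\<forall>h<m. norm (e h) = 1 \<and> P h = outer (e h) (e h)"
    by metis
  have e1: "ip (e h) (e h) = 1" if "h < m" for h using e that by (simp add: ip_self)
  have sumP: "(\<Sum>h<m. P h) = mat 1" using assms by (simp add: von_neumann_meas_def)
  have orth: "ip (e h) (e g) = 0" if "h < m" "g < m" "h \<noteq> g" for h g
  proof -
    have "1 = ip (e g) ((\<Sum>h<m. P h) *v e g)" using e1[OF that(2)] sumP by simp
    also have "\<dots> = (\<Sum>h<m. ip (e g) (P h *v e g))" by (simp add: mv_sum_left ip_sum_right)
    also have "\<dots> = (\<Sum>h<m. of_real ((cmod (ip (e h) (e g)))^2))"
      apply (intro sum.cong refl)
      using e by (simp add: outer_mv ip_cscale_right ip_cnj[of "e g"] mult_cnj_sq2)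
    finally have s: "(\<Sum>h<m. (cmod (ip (e h) (e g)))^2) = 1"
      by (metis of_real_eq_1_iff of_real_sum)
    have "(\<Sum>h<m. (cmod (ip (e h) (e g)))^2) = (cmod (ip (e g) (e g)))^2 + (\<Sum>h\<in>{..<m}-{g}. (cmod (ip (e h) (e g)))^2)"
      using that(2) by (simp add: sum.remove)
    with s e1[OF that(2)] have "(\<Sum>h\<in>{..<m}-{g}. (cmod (ip (e h) (e g)))^2) = 0" by simp
    then have "(cmod (ip (e h) (e g)))^2 = 0"
      using that by (subst (asm) sum_nonneg_eq_0_iff) auto
    then show ?thesis by simp
  qed
  show ?thesis using e e1 orth by blast
qed


lemma ip_diff_right: "ip u (v - w) = ip u v - ip u w"
  by (simp add: ip_def algebra_simps sum_subtractf)

lemma ip_cscale_left: "ip (cscale c u) v = cnj c * ip u v"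
  by (simp add: ip_def sum_distrib_left mult_ac)

lemma ortho_bound:
  fixes f :: "nat \<Rightarrow> complex^'n::finite"
  assumes on: "orthonormal_family M f"
  shows "M \<le> CARD('n)"
proof -
  define Q where "Q = (\<Sum>s<M. outer (f s) (f s))"
  have QQ: "Q ** Q = Q"
  proof -
    have "Q ** Q = (\<Sum>s<M. \<Sum>t<M. msc (ip (f t) (f s)) (outer (f t) (f s)))"
      by (simp add: Q_def mmult_sum_left mmult_sum_right outer_mult)
    also have "\<dots> = (\<Sum>s<M. \<Sum>t<M. if t = s then outer (f t) (f s) else 0)"
      by (intro sum.cong refl) (simp add: ortho_ip[OF on])
    also have "\<dots> = Q" by (simp add: Q_def)
    finally show ?thesis .
  qed
  have Qh: "Q$y$x = cnj (Q$x$y)" for x y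
    by (simp add: Q_def sum_mat_nth mult.commute)
  define q where "q x = (\<Sum>s<M. (cmod (f s $ x))^2)" for x
  have Qd: "Q$x$x = of_real (q x)" for x
    by (simp add: Q_def sum_mat_nth q_def mult_cnj_sq2[symmetric] of_real_sum)
  have q1: "q x \<le> 1" for x
  proof -
    have "Q$x$x = (\<Sum>y\<in>UNIV. Q$x$y * Q$y$x)" using QQ by (metis mmult_nth)
    also have "\<dots> = (\<Sum>y\<in>UNIV. of_real ((cmod (Q$x$y))^2))"
    proof (rule sum.cong[OF refl])
      fix y
      show "Q$x$y * Q$y$x = of_real ((cmod (Q$x$y))^2)"
        by (subst Qh[of y x]) (simp add: mult_cnj_sq2)
    qed
    finally have "of_real (q x) = (of_real (\<Sum>y\<in>UNIV. (cmod (Q$x$y))^2) :: complex)"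
      by (simp only: Qd of_real_sum)
    then have "q x = (\<Sum>y\<in>UNIV. (cmod (Q$x$y))^2)" by (simp only: of_real_eq_iff)
    also have "\<dots> \<ge> (cmod (Q$x$x))^2"
      by (rule member_le_sum) auto
    finally have le: "(cmod (Q$x$x))^2 \<le> q x" .
    have qnn: "q x \<ge> 0" unfolding q_def by (intro sum_nonneg zero_le_power2)
    have "cmod (Q$x$x) = q x" by (simp only: Qd norm_of_real abs_of_nonneg[OF qnn])
    with le have "(q x)^2 \<le> q x" by simp
    show ?thesis
    proof (rule ccontr)
      assume "\<not> q x \<le> 1"
      then have "1 < q x" by simp
      then have "q x * 1 < q x * q x" by (intro mult_strict_left_mono) auto
      with \<open>(q x)^2 \<le> q x\<close> show False by (simp add: power2_eq_square)
    qed
  qed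
  have "of_nat M = mtrace Q"
    by (simp add: Q_def mtrace_sum mtrace_outer1 ortho_ip[OF on])
  also have "\<dots> = of_real (\<Sum>x\<in>UNIV. q x)" by (simp add: mtrace_def Qd of_real_sum)
  finally have "real M = (\<Sum>x\<in>UNIV. q x)" by (metis of_real_eq_iff of_real_of_nat_eq)
  also have "\<dots> \<le> (\<Sum>x\<in>(UNIV::'n set). 1)" by (intro sum_mono q1)
  finally show ?thesis by simp
qed

lemma extend_step:
  fixes f :: "nat \<Rightarrow> complex^'n::finite"
  assumes on: "orthonormal_family n f" and nc: "(\<Sum>s<n. outer (f s) (f s)) \<noteq> mat 1"
  shows "\<exists>w. ip w w = 1 \<and> (\<forall>s<n. ip (f s) w = 0)"
proof -
  define Q where "Q = (\<Sum>s<n. outer (f s) (f s))"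
  obtain v where v: "Q *v v \<noteq> v" using nc unfolding Q_def by (metis matrix_eq matrix_vector_mul_lid)
  define w0 where "w0 = v - Q *v v"
  have w0nz: "w0 \<noteq> 0" using v by (simp add: w0_def)
  have orth0: "ip (f t) w0 = 0" if "t < n" for t
  proof -
    have "ip (f t) (Q *v v) = (\<Sum>s<n. ip (f s) v * ip (f t) (f s))"
      by (simp add: Q_def mv_sum_left ip_sum_right outer_mv ip_cscale_right)
    also have "\<dots> = (\<Sum>s<n. if t = s then ip (f s) v else 0)"
      by (intro sum.cong refl) (simp add: ortho_ip[OF on that])
    also have "\<dots> = ip (f t) v" using that by simp
    finally show ?thesis by (simp add: w0_def ip_diff_right)
  qed
  define w where "w = cscale (of_real (1 / norm w0)) w0"
  have "ip w w = of_real (1 / norm w0) * of_real (1 / norm w0) * of_real ((norm w0)^2)"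
    unfolding w_def ip_cscale_left ip_cscale_right by (simp only: ip_self) simp
  also have "\<dots> = 1" using w0nz by (simp add: field_simps power2_eq_square)
  finally have "ip w w = 1" .
  moreover have "\<forall>s<n. ip (f s) w = 0" by (simp add: w_def ip_cscale_right orth0)
  ultimately show ?thesis by blast
qed

lemma extend_basis:
  fixes f :: "nat \<Rightarrow> complex^'n::finite"
  assumes "orthonormal_family n f"
  shows "\<exists>M g. n \<le> M \<and> (\<forall>i<n. g i = f i) \<and> orthonormal_family M g \<and>
     (\<Sum>s<M. outer (g s) (g s)) = mat 1"
  using assms
proof (induction "CARD('n) - n" arbitrary: n f rule: less_induct)
  case less
  show ?case
  proof (cases "(\<Sum>s<n. outer (f s) (f s)) = mat 1")
    case True
    then show ?thesis using less.prems by blast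
  next
    case False
    obtain w where w: "ip w w = 1" "\<forall>s<n. ip (f s) w = 0"
      using extend_step[OF less.prems False] by blast
    define f' where "f' = f(n := w)"
    have on': "orthonormal_family (Suc n) f'"
      unfolding orthonormal_family_def
    proof (intro allI impI)
      fix i j assume ij: "i < Suc n" "j < Suc n"
      have "ip (f' i) (f' j) = (if i = j then 1 else 0)"
      proof (cases "i = n"; cases "j = n")
        assume "i = n" "j = n" then show ?thesis using w by (simp add: f'_def)
      next
        assume "i = n" "j \<noteq> n" then show ?thesis using w ij ip_cnj[of "f j" w]
          by (simp add: f'_def)
      next
        assume "i \<noteq> n" "j = n" then show ?thesis using w ij by (simp add: f'_def)
      next
        assume "i \<noteq> n" "j \<noteq> n" then show ?thesis using ij ortho_ip[OF less.prems]
          by (simp add: f'_def)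
      qed
      then show "(\<Sum>x\<in>UNIV. cnj (f' i $ x) * f' j $ x) = (if i = j then 1 else 0)"
        by (simp add: ip_def)
    qed
    have "Suc n \<le> CARD('n)" using ortho_bound[OF on'] .
    then have "CARD('n) - Suc n < CARD('n) - n" by simp
    from less.hyps[OF this on'] obtain M g where
      g: "Suc n \<le> M" "\<forall>i<Suc n. g i = f' i" "orthonormal_family M g" "(\<Sum>s<M. outer (g s) (g s)) = mat 1"
      by blast
    have "\<forall>i<n. g i = f i" using g(2) by (simp add: f'_def)
    then show ?thesis using g by (intro exI[of _ M] exI[of _ g]) auto
  qed
qed


lemma lt_mk: "s < M \<Longrightarrow> t < K \<Longrightarrow> s * K + t < (M::nat) * K"
proof -
  assume b: "s < M" "t < K"
  have "s * K + t < s * K + K" using b by simp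
  also have "\<dots> = (s+1) * K" by simp
  also have "\<dots> \<le> M * K" using b by (intro mult_right_mono) auto
  finally show ?thesis .
qed

lemma sum_divmod: "(\<Sum>h<(M::nat)*K. F (h div K) (h mod K)) = (\<Sum>s<M. \<Sum>t<K. F s t)"
proof -
  have "(\<Sum>s<M. \<Sum>t<K. F s t) = (\<Sum>(s,t)\<in>{..<M}\<times>{..<K}. F s t)"
    by (simp add: sum.cartesian_product)
  also have "\<dots> = (\<Sum>h<M*K. F (h div K) (h mod K))"
    apply (rule sum.reindex_bij_witness[where i="\<lambda>h. (h div K, h mod K)" and j="\<lambda>(s,t). s*K+t"])
        apply (auto simp: lt_mk)
     apply (metis less_mult_imp_div_less)
    apply (metis mod_less_divisor mult_is_0 not_gr_zero not_less_zero)
    done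
  finally show ?thesis by simp
qed

lemma tensor_sum: "tensor_op (\<Sum>s\<in>S. X s) (\<Sum>t\<in>T. Y t) = (\<Sum>s\<in>S. \<Sum>t\<in>T. tensor_op (X s) (Y t))"
  by (simp add: vec_eq_iff sum_mat_nth sum_product)

lemma tensor_id: "tensor_op (mat 1) (mat 1) = mat 1"
  by (simp add: vec_eq_iff mat_nth prod_eq_iff)

lemma diag_invariant:
  assumes on: "orthonormal_family M f" and nM: "n \<le> M" and fu: "\<forall>i<n. f i = u i"
  shows "(\<Sum>s<M. outer (f s) (f s) ** (\<Sum>i<n. msc (c i) (outer (u i) (u i))) ** outer (f s) (f s))
       = (\<Sum>i<n. msc (c i) (outer (u i) (u i)))"
proof -
  have U: "(\<Sum>i<n. msc (c i) (outer (u i) (u i))) = (\<Sum>i<n. msc (c i) (outer (f i) (f i)))"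
    using fu by (intro sum.cong refl) auto
  have "(\<Sum>s<M. outer (f s) (f s) ** (\<Sum>i<n. msc (c i) (outer (f i) (f i))) ** outer (f s) (f s))
     = (\<Sum>s<M. \<Sum>i<n. msc (c i * (ip (f s) (f i) * ip (f i) (f s))) (outer (f s) (f s)))"
    by (simp add: mmult_sum_left mmult_sum_right msc_mult_left msc_mult_right outer_mult mult_ac)
  also have "\<dots> = (\<Sum>s<M. \<Sum>i<n. if i = s then msc (c i) (outer (f i) (f i)) else 0)"
    using nM by (intro sum.cong refl) (auto simp: ortho_ip[OF on])
  also have "\<dots> = (\<Sum>i<n. \<Sum>s<M. if i = s then msc (c i) (outer (f i) (f i)) else 0)"
    by (rule sum.swap)
  also have "\<dots> = (\<Sum>i<n. msc (c i) (outer (f i) (f i)))"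
    using nM by (intro sum.cong refl) auto
  finally show ?thesis using U by simp
qed

lemma mat1_nz: "mat 1 \<noteq> (0::complex^'n::finite^'n)"
proof
  assume "mat 1 = (0::complex^'n::finite^'n)"
  then have "(mat 1::complex^'n::finite^'n) $ undefined $ undefined = 0" by simp
  then show False by (simp add: mat_nth)
qed

lemma norm_from_ip: "ip v v = 1 \<Longrightarrow> norm v = 1"
proof -
  assume "ip v v = 1"
  then have "of_real ((norm v)^2) = (1::complex)" by (simp only: ip_self[symmetric])
  then have "(norm v)^2 = 1" by (simp only: of_real_eq_1_iff)
  then show "norm v = 1" using norm_ge_zero[of v] by (simp add: power2_eq_1_iff)
qed

lemma exists_meas:
  fixes uB :: "nat \<Rightarrow> complex^'b::finite" and vC :: "nat \<Rightarrow> complex^'c::finite"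
    and a b :: "nat \<Rightarrow> complex"
  assumes onB: "orthonormal_family n uB" and onC: "orthonormal_family k vC"
  defines "rB \<equiv> (\<Sum>i<n. msc (a i) (outer (uB i) (uB i)))"
    and "rC \<equiv> (\<Sum>j<k. msc (b j) (outer (vC j) (vC j)))"
  shows "\<exists>m P. von_neumann_meas m P \<and> meas_channel m P (tensor_op rB rC) = tensor_op rB rC"
proof -
  obtain M f where f: "n \<le> M" "\<forall>i<n. f i = uB i" "orthonormal_family M f"
      "(\<Sum>s<M. outer (f s) (f s)) = mat 1"
    using extend_basis[OF onB] by blast
  obtain K g where g: "k \<le> K" "\<forall>i<k. g i = vC i" "orthonormal_family K g"
      "(\<Sum>s<K. outer (g s) (g s)) = mat 1"
    using extend_basis[OF onC] by blast
  have K: "K > 0"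
  proof (rule ccontr)
    assume "\<not> K > 0"
    then have "K = 0" by simp
    with g(4) mat1_nz[where 'n='c] show False by simp
  qed
  define F where "F s = outer (f s) (f s)" for s
  define G where "G t = outer (g t) (g t)" for t
  define P where "P h = tensor_op (F (h div K)) (G (h mod K))" for h
  have Pe: "P h = outer (tensor_vec (f (h div K)) (g (h mod K))) (tensor_vec (f (h div K)) (g (h mod K)))" for h
    by (simp add: P_def F_def G_def R_eq)
  have vn: "von_neumann_meas (M*K) P"
    unfolding von_neumann_meas_def
  proof
    show "\<forall>h<M*K. rank_one_proj (P h)"
    proof (intro allI impI)
      fix h assume h: "h < M*K"
      have "h div K < M" using h by (simp add: less_mult_imp_div_less)
      moreover have "h mod K < K" using K by simp
      ultimately have "ip (tensor_vec (f (h div K)) (g (h mod K))) (tensor_vec (f (h div K)) (g (h mod K))) = 1"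
        using f(3) g(3) by (simp add: ip_tensor ortho_ip)
      then show "rank_one_proj (P h)" unfolding rank_one_proj_def Pe
        by (intro exI[of _ "tensor_vec (f (h div K)) (g (h mod K))"]) (simp add: norm_from_ip)
    qed
    have "(\<Sum>h<M*K. P h) = (\<Sum>s<M. \<Sum>t<K. tensor_op (F s) (G t))"
      unfolding P_def by (rule sum_divmod)
    also have "\<dots> = tensor_op (\<Sum>s<M. F s) (\<Sum>t<K. G t)" by (simp add: tensor_sum)
    also have "\<dots> = mat 1" using f(4) g(4) by (simp add: F_def G_def tensor_id)
    finally show "(\<Sum>h<M*K. P h) = mat 1" .
  qed
  have "meas_channel (M*K) P (tensor_op rB rC) =
     (\<Sum>s<M. \<Sum>t<K. tensor_op (F s ** rB ** F s) (G t ** rC ** G t))"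
    unfolding meas_channel_def P_def
    by (subst sum_divmod[where F="\<lambda>s t. tensor_op (F s) (G t) ** tensor_op rB rC ** tensor_op (F s) (G t)"])
       (simp add: tensor_mult)
  also have "\<dots> = tensor_op (\<Sum>s<M. F s ** rB ** F s) (\<Sum>t<K. G t ** rC ** G t)"
    by (simp add: tensor_sum)
  also have "\<dots> = tensor_op rB rC"
    unfolding rB_def rC_def F_def G_def
    by (simp add: diag_invariant[OF f(3) f(1) f(2)] diag_invariant[OF g(3) g(1) g(2)])
  finally show ?thesis using vn by blast
qed


lemma quad_ip: "(\<Sum>i\<in>UNIV. \<Sum>j\<in>UNIV. cnj (v$i) * X$i$j * v$j) = ip v (X *v v)"
  by (simp add: ip_def mvmult_nth sum_distrib_left mult_ac)

lemma psd_ip: "psd X \<longleftrightarrow> (\<forall>v. \<exists>r::real. r \<ge> 0 \<and> ip v (X *v v) = complex_of_real r)"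
  by (simp add: psd_def quad_ip)

lemma mult_if0: "x * (if P then y else 0) = (if P then x * y else (0::complex))" by simp
lemma if_mult0': "(if P then y else 0) * x = (if P then y * x else (0::complex))" by simp
lemma cnj_if0: "cnj (if P then y else 0) = (if P then cnj y else 0)" by simp

lemma quad_two:
  fixes X :: "complex^'n::finite^'n" and i j :: 'n and a b :: complex
  defines "v \<equiv> (\<chi> k. (if k = i then a else 0) + (if k = j then b else 0)) :: complex^'n"
  shows "ip v (X *v v) = cnj a * (a * X$i$i + b * X$i$j) + cnj b * (a * X$j$i + b * X$j$j)"
proof -
  have Xv: "(X *v v) $ k = a * X$k$i + b * X$k$j" for k
    by (simp add: v_def mvmult_nth distrib_left sum.distrib mult_if0 mult.commute)
  show ?thesis
    unfolding ip_def Xv by (simp add: v_def distrib_right sum.distrib cnj_if0 if_mult0')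
qed

lemma psd_herm:
  fixes X :: "complex^'n::finite^'n"
  assumes "psd X"
  shows "adj X = X"
proof -
  have im0: "Im (ip v (X *v v)) = 0" for v
    using assms unfolding psd_ip by (metis Im_complex_of_real)
  have H: "X$j$i = cnj (X$i$j)" for i j
  proof -
    let ?v = "\<lambda>a b. (\<chi> k. (if k = i then a else 0) + (if k = j then b else 0)) :: complex^'n"
    have q: "Im (cnj a * (a * X$i$i + b * X$i$j) + cnj b * (a * X$j$i + b * X$j$j)) = 0" for a b
      using im0[of "?v a b"] quad_two[of i a j b X] by simp
    have h1: "Im (X$i$i) = 0" using q[of 1 0] by simp
    have h2: "Im (X$j$j) = 0" using q[of 0 1] by simp
    have h3: "Im (X$i$j) + Im (X$j$i) = 0" using q[of 1 1] h1 h2 by simp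
    have h4: "Re (X$i$j) - Re (X$j$i) = 0" using q[of 1 \<i>] h1 h2 by simp
    show ?thesis using h3 h4 by (simp add: complex_eq_iff)
  qed
  have "adj X $ i $ j = X $ i $ j" for i j using H[of j i] by simp
  then show ?thesis by (simp add: vec_eq_iff)
qed

lemma mm_diff_left: "(A - B) ** C = A ** C - B ** (C::complex^'n::finite^'n)"
  by (simp add: vec_eq_iff mmult_nth algebra_simps sum_subtractf)
lemma mm_diff_right: "A ** (B - C) = A ** B - A ** (C::complex^'n::finite^'n)"
  by (simp add: vec_eq_iff mmult_nth algebra_simps sum_subtractf)

lemma hsip_zero: "hsip A A = 0 \<Longrightarrow> A = 0"
proof -
  assume "hsip A A = 0"
  then have s: "(\<Sum>p\<in>UNIV. \<Sum>q\<in>UNIV. (cmod (A$p$q))^2) = 0"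
    unfolding hsip_self by (simp only: of_real_eq_0_iff)
  have nn: "\<And>p. p \<in> UNIV \<Longrightarrow> 0 \<le> (\<Sum>q\<in>UNIV. (cmod (A$p$q))^2)"
    by (intro sum_nonneg zero_le_power2)
  have s1: "\<forall>p\<in>UNIV. (\<Sum>q\<in>UNIV. (cmod (A$p$q))^2) = 0"
    using iffD1[OF sum_nonneg_eq_0_iff[OF finite_class.finite_UNIV nn] s] .
  have "(cmod (A$p$q))^2 = 0" for p q
  proof -
    have nn2: "\<And>q. q \<in> UNIV \<Longrightarrow> 0 \<le> (cmod (A$p$q))^2" by simp
    have "(\<Sum>q\<in>UNIV. (cmod (A$p$q))^2) = 0" using s1 by simp
    from iffD1[OF sum_nonneg_eq_0_iff[OF finite_class.finite_UNIV nn2] this] show ?thesis by simp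
  qed
  then show "A = 0" by (simp add: vec_eq_iff)
qed

lemma psd_outer: "psd (outer w w)"
  unfolding psd_ip
proof
  fix v
  have "ip v (outer w w *v v) = ip v w * cnj (ip v w)"
    by (simp add: outer_mv ip_cscale_right ip_cnj[of w v] mult.commute)
  also have "\<dots> = of_real ((cmod (ip v w))^2)" by (simp add: mult_cnj_sq2)
  finally show "\<exists>r. 0 \<le> r \<and> ip v (outer w w *v v) = complex_of_real r"
    by (intro exI[of _ "(cmod (ip v w))^2"]) simp
qed

lemma sqrt_unique:
  fixes Psi :: "complex^'n::finite"
  assumes psi1: "ip Psi Psi = 1" and psdX: "psd X" and XX: "X ** X = outer Psi Psi"
  shows "X = outer Psi Psi"
proof -
  let ?R = "outer Psi Psi"
  have hX: "adj X = X" using psd_herm[OF psdX] .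
  have RR: "?R ** ?R = ?R" using psi1 by (simp add: outer_mult)
  define A where "A = X - X ** ?R"
  have adjA: "adj A = X - ?R ** X" by (simp add: A_def adj_diff adj_mult hX)
  have "adj A ** A = (X - ?R ** X) ** (X - X ** ?R)"
    by (simp only: adjA, simp only: A_def)
  also have "\<dots> = X ** X - X ** (X ** ?R) - (?R ** X) ** X + (?R ** X) ** (X ** ?R)"
    by (simp only: mm_diff_left mm_diff_right) (simp add: algebra_simps)
  also have "\<dots> = 0"
    by (simp add: matrix_mul_assoc XX RR flip: matrix_mul_assoc[of "outer Psi Psi" X X])
  finally have "hsip A A = 0" by (simp add: mtrace_adj[symmetric] mtrace_def)
  then have "A = 0" by (rule hsip_zero)
  then have X1: "X = X ** ?R" by (simp add: A_def)
  then have "adj X = adj (X ** ?R)" by simp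
  then have X2: "X = ?R ** X" by (simp add: adj_mult hX)
  have "X = ?R ** X ** ?R" using X1 X2 by (metis matrix_mul_assoc)
  also have "\<dots> = outer Psi (X *v Psi) ** ?R"
    by (simp add: mult_outer_right hX)
  also have "\<dots> = msc (ip (X *v Psi) Psi) ?R"
    by (rule outer_mult)
  finally have X3: "X = msc (ip (X *v Psi) Psi) ?R" .
  obtain r where r: "r \<ge> 0" "ip Psi (X *v Psi) = complex_of_real r"
    using psdX unfolding psd_ip by blast
  have c: "ip (X *v Psi) Psi = complex_of_real r"
    using r(2) ip_cnj[of "X *v Psi" Psi] by simp
  have X4: "X = msc (of_real r) ?R" using X3 c by simp
  have "?R = X ** X" using XX by simp
  also have "\<dots> = msc (of_real (r * r)) ?R" by (subst (1 2) X4) (simp add: msc_mult_left msc_mult_right RR)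
  finally have E: "?R = msc (of_real (r * r)) ?R" .
  obtain p where p: "Psi $ p \<noteq> 0"
  proof -
    have "Psi \<noteq> 0" using psi1 by (auto simp: ip_def)
    then show ?thesis using that by (auto simp: vec_eq_iff)
  qed
  have "?R $ p $ p = of_real (r*r) * ?R $ p $ p" using E by (metis msc_nth)
  moreover have "?R $ p $ p \<noteq> 0" using p by simp
  ultimately have "complex_of_real (r*r) = 1" by simp
  then have "r * r = 1" by (simp only: of_real_eq_1_iff)
  then have "(r - 1) * (r + 1) = 0" by (simp add: algebra_simps)
  then have "r = 1" using r(1) by auto
  then show ?thesis using X4 by simp
qed

lemma mat_sqrt_outer:
  assumes "ip Psi Psi = 1"
  shows "mat_sqrt (outer Psi Psi) = outer Psi Psi"
  unfolding mat_sqrt_def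
proof (rule the_equality)
  show "psd (outer Psi Psi) \<and> outer Psi Psi ** outer Psi Psi = outer Psi Psi"
    using assms by (simp add: psd_outer outer_mult)
  show "\<And>X. psd X \<and> X ** X = outer Psi Psi \<Longrightarrow> X = outer Psi Psi"
    using sqrt_unique[OF assms] by blast
qed


lemma pow22: "((x::complex)^2)^2 = x^4"
  by (simp flip: power_mult)

lemma set_singleton_eq:
  assumes "\<And>m P. Q m P \<Longrightarrow> f m P = c" and "\<exists>m P. Q m P"
  shows "{f m P | m P. Q m P} = {c}"
  using assms by blast

theorem theorem1:
  fixes psi :: "complex^('a::finite \<times> 'b::finite)"
    and phi :: "complex^('c::finite \<times> 'd::finite)"
    and n k :: nat
    and lam mu :: "nat \<Rightarrow> real"
    and uA :: "nat \<Rightarrow> complex^'a" and uB :: "nat \<Rightarrow> complex^'b"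
    and vC :: "nat \<Rightarrow> complex^'c" and vD :: "nat \<Rightarrow> complex^'d"
  assumes "norm psi = 1" and "norm phi = 1"
    and "orthonormal_family n uA" and "orthonormal_family n uB"
    and "orthonormal_family k vC" and "orthonormal_family k vD"
    and "\<forall>i<n. lam i \<ge> 0" and "\<forall>j<k. mu j \<ge> 0"
    and "psi = (\<Sum>i<n. cscale (complex_of_real (lam i)) (tensor_vec (uA i) (uB i)))"
    and "phi = (\<Sum>j<k. cscale (complex_of_real (mu j)) (tensor_vec (vC j) (vD j)))"
  shows "NHb (outer psi psi) (outer phi phi) = 1 - (\<Sum>i<n. \<Sum>j<k. lam i ^ 4 * mu j ^ 4)"
proof -
  define Psi where "Psi = tensor_vec psi phi"
  have R: "tensor_op (outer psi psi) (outer phi phi) = outer Psi Psi" by (simp add: Psi_def R_eq)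
  have p1: "ip psi psi = 1" using assms(1) by (simp add: ip_self)
  have p2: "ip phi phi = 1" using assms(2) by (simp add: ip_self)
  have P1: "ip Psi Psi = 1" by (simp add: Psi_def ip_tensor p1 p2)
  have S: "mat_sqrt (outer Psi Psi) = outer Psi Psi" by (rule mat_sqrt_outer[OF P1])
  define rB where "rB = (\<Sum>i<n. msc (complex_of_real ((lam i)^2)) (outer (uB i) (uB i)))"
  define rC where "rC = (\<Sum>j<k. msc (complex_of_real ((mu j)^2)) (outer (vC j) (vC j)))"
  have rho: "ptrace_AD (outer Psi Psi) = tensor_op rB rC"
    unfolding Psi_def ptrace_tensor rB_def rC_def
    using schmidt_B[OF assms(3) assms(9)] schmidt_C[OF assms(6) assms(10)] by simp
  define c where "c = (\<Sum>i<n. \<Sum>j<k. lam i ^ 4 * mu j ^ 4)"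
  have trr: "mtrace (tensor_op rB rC ** tensor_op rB rC) = complex_of_real c"
  proof -
    have "mtrace (tensor_op rB rC ** tensor_op rB rC) = mtrace (rB ** rB) * mtrace (rC ** rC)"
      by (simp add: tensor_mult mtrace_tensor)
    also have "\<dots> = (\<Sum>i<n. (complex_of_real ((lam i)^2))^2) * (\<Sum>j<k. (complex_of_real ((mu j)^2))^2)"
      unfolding rB_def rC_def by (simp only: trace_sq_diag[OF assms(4)] trace_sq_diag[OF assms(5)])
    also have "\<dots> = complex_of_real c"
      by (simp add: c_def sum_product pow22)
    finally show ?thesis .
  qed
  have val: "(hs_norm (outer Psi Psi - (\<Sum>h<m. embed_BC (P h) ** outer Psi Psi ** embed_BC (P h))))^2 = 1 - c"
    if vn: "von_neumann_meas m P" and inv: "meas_channel m P (tensor_op rB rC) = tensor_op rB rC"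
    for m and P :: "nat \<Rightarrow> complex^('b \<times> 'c)^('b \<times> 'c)"
  proof -
    obtain e where e1: "\<forall>h<m. P h = outer (e h) (e h) \<and> ip (e h) (e h) = 1"
      and e2: "\<forall>h<m. \<forall>g<m. h \<noteq> g \<longrightarrow> ip (e h) (e g) = 0"
      using vn_structure[OF vn] by blast
    let ?E = "\<lambda>h. (embed_BC (P h) :: complex^(('a\<times>'b)\<times>('c\<times>'d))^(('a\<times>'b)\<times>('c\<times>'d)))"
    have herm: "\<forall>h<m. adj (?E h) = ?E h"
      using e1 by (simp add: embed_adj)
    have orth: "\<forall>h<m. \<forall>g<m. ?E h ** ?E g = (if h = g then ?E h else 0)"
    proof (intro allI impI)
      fix h g assume hg: "h < m" "g < m"
      have "?E h ** ?E g = embed_BC (msc (ip (e h) (e g)) (outer (e h) (e g)))"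
        using e1 hg by (simp add: embed_mult outer_mult)
      then show "?E h ** ?E g = (if h = g then ?E h else 0)"
        using e1 e2 hg by (auto simp: embed_zero)
    qed
    have "(hs_norm (outer Psi Psi - (\<Sum>h<m. ?E h ** outer Psi Psi ** ?E h)))^2
        = 1 - Re (\<Sum>h<m. (ip Psi (?E h *v Psi))^2)"
      by (rule main_norm[OF P1 herm orth])
    also have "(\<Sum>h<m. (ip Psi (?E h *v Psi))^2) = (\<Sum>h<m. (mtrace (tensor_op rB rC ** P h))^2)"
      by (simp add: embed_ip rho)
    also have "\<dots> = mtrace (tensor_op rB rC ** tensor_op rB rC)"
      using trace_sq_channel[of m P e "tensor_op rB rC"] e1 inv by simp
    finally show ?thesis using trr by simp
  qed
  obtain m0 P0 where ex: "von_neumann_meas m0 P0" "meas_channel m0 P0 (tensor_op rB rC) = tensor_op rB rC"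
    using exists_meas[OF assms(4) assms(5), of "\<lambda>i. complex_of_real ((lam i)^2)" "\<lambda>j. complex_of_real ((mu j)^2)"]
    unfolding rB_def rC_def by blast
  have "NHb (outer psi psi) (outer phi phi) = Sup {(hs_norm (outer Psi Psi - (\<Sum>h<m. embed_BC (P h) ** outer Psi Psi ** embed_BC (P h))))\<^sup>2 | m P.
           von_neumann_meas m P \<and> meas_channel m P (tensor_op rB rC) = tensor_op rB rC}"
    by (simp add: NHb_def Let_def R S rho)
  also have "{(hs_norm (outer Psi Psi - (\<Sum>h<m. embed_BC (P h) ** outer Psi Psi ** embed_BC (P h))))\<^sup>2 | m P.
           von_neumann_meas m P \<and> meas_channel m P (tensor_op rB rC) = tensor_op rB rC} = {1 - c}"
    by (rule set_singleton_eq) (use val ex in auto)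
  finally show ?thesis by (simp add: c_def)
qed


end
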